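(* Let $q=2^m$ with $q\equiv 1\pmod 3$, and let $s=\frac{q^2+q+1}{3}$. Let $c\in\mathbb{F}_{q^2}^*$ satisfy $\mathrm{Tr}_1^m(c^{q+1})=0$. Then \[ f(x)=cx+x^s+c^q x^{qs} \] is a permutation polynomial of $\mathbb{F}_{q^2}$.
   Context: For $y\in\mathbb{F}_{2^m}$, $\mathrm{Tr}_1^m(y)=\sum_{i=0}^{m-1}y^{2^i}$ is the absolute trace; note $c^{q+1}\in\mathbb{F}_q$. A polynomial is a permutation polynomial of a finite field if it induces a bijection of that field. *)

theory Defs
  imports Main
begin

text \<open>Absolute trace Tr_1^m(y) = sum_{i=0}^{m-1} y^(2^i), meant for y in F_{2^m}.\<close>
definition abs_trace :: "nat \<Rightarrow> 'a::comm_ring_1 \<Rightarrow> 'a" where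
  "abs_trace m y = (\<Sum>i<m. y ^ (2 ^ i))"

end

theory Submission
  imports Defs
begin

lemma fermat_fin:
  fixes x :: "'a::{field,finite}"
  assumes "x \<noteq> 0"
  shows "x ^ (card (UNIV::'a set) - 1) = 1"
proof -
  let ?A = "UNIV - {0::'a}"
  have cardA: "card ?A = card (UNIV::'a set) - 1" by (simp add: card_Diff_singleton)
  have img: "(\<lambda>y. x * y) ` ?A = ?A"
  proof
    show "(\<lambda>y. x * y) ` ?A \<subseteq> ?A" using assms by auto
    show "?A \<subseteq> (\<lambda>y. x * y) ` ?A"
    proof
      fix z assume "z \<in> ?A"
      then have "z = x * (z / x)" "z / x \<in> ?A" using assms by auto
      then show "z \<in> (\<lambda>y. x * y) ` ?A" by blast
    qed
  qed
  have inj: "inj_on (\<lambda>y. x * y) ?A" using assms by (auto simp: inj_on_def)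
  have "prod id ?A = prod ((\<lambda>y. x * y)) ?A"
    using prod.reindex[OF inj, of id] img by simp
  also have "\<dots> = x ^ card ?A * prod id ?A"
    by (simp add: prod.distrib)
  finally have "prod id ?A = x ^ card ?A * prod id ?A" .
  moreover have "prod id ?A \<noteq> 0" by (simp)
  ultimately have "x ^ card ?A = 1" by simp
  then show ?thesis using cardA by simp
qed

lemma pow_card:
  fixes x :: "'a::{field,finite}"
  shows "x ^ card (UNIV::'a set) = x"
proof (cases "x = 0")
  case True
  have "card (UNIV::'a set) > 0" by (simp add: finite_UNIV_card_ge_0)
  then show ?thesis using True by simp
next
  case False
  have "card (UNIV::'a set) > 0" by (simp add: finite_UNIV_card_ge_0)
  then have "x ^ card (UNIV::'a set) = x * x ^ (card (UNIV::'a set) - 1)"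
    by (metis Suc_diff_1 power_Suc)
  then show ?thesis using fermat_fin[OF False] by simp
qed


lemma char2_add_self:
  fixes a :: "'a::comm_ring_1"
  assumes two: "(1::'a) + 1 = 0"
  shows "a + a = 0"
proof -
  have "a + a = (1 + 1) * a" by (simp add: distrib_right)
  then show ?thesis using two by simp
qed

lemma char2_frob2:
  fixes a b :: "'a::comm_ring_1"
  assumes two: "(1::'a) + 1 = 0"
  shows "(a + b) ^ (2 ^ i) = a ^ (2 ^ i) + b ^ (2 ^ i)"
proof (induction i)
  case 0
  then show ?case by simp
next
  case (Suc i)
  have sq: "(x + y) ^ 2 = x ^ 2 + y ^ 2" for x y :: 'a
  proof -
    have "(x + y) ^ 2 = x ^ 2 + y ^ 2 + (x * y + x * y)" by (simp add: power2_eq_square algebra_simps)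
    then show ?thesis using char2_add_self[OF two, of "x*y"] by simp
  qed
  have "(a + b) ^ (2 ^ Suc i) = ((a + b) ^ (2 ^ i)) ^ 2"
    by (simp add: power_mult[symmetric] mult.commute)
  also have "\<dots> = (a ^ (2 ^ i)) ^ 2 + (b ^ (2 ^ i)) ^ 2" using Suc sq by simp
  also have "\<dots> = a ^ (2 ^ Suc i) + b ^ (2 ^ Suc i)"
    by (simp add: power_mult[symmetric] mult.commute)
  finally show ?case .
qed

lemma char2_telescope:
  fixes w :: "'a::comm_ring_1"
  assumes two: "(1::'a) + 1 = 0"
  shows "(\<Sum>i<n. (w ^ 2 + w) ^ (2 ^ i)) = w ^ (2 ^ n) + w"
proof (induction n)
  case 0
  then show ?case using char2_add_self[OF two, of w] by simp
next
  case (Suc n)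
  have "(w ^ 2 + w) ^ (2 ^ n) = w ^ (2 ^ Suc n) + w ^ (2 ^ n)"
    using char2_frob2[OF two, of "w^2" w n] by (simp add: power_mult[symmetric])
  then have "(\<Sum>i<Suc n. (w ^ 2 + w) ^ (2 ^ i)) = w ^ (2 ^ n) + w + (w ^ (2 ^ Suc n) + w ^ (2 ^ n))"
    using Suc by simp
  also have "\<dots> = w ^ (2 ^ Suc n) + w + (w ^ (2 ^ n) + w ^ (2 ^ n))" by (simp add: algebra_simps)
  also have "\<dots> = w ^ (2 ^ Suc n) + w" using char2_add_self[OF two, of "w ^ (2 ^ n)"] by simp
  finally show ?case .
qed

theorem proposition2:
  fixes m q s :: nat and c :: "'a::{field, finite}"
  assumes q_def: "q = 2 ^ m"
    and card: "card (UNIV :: 'a set) = q ^ 2"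
    and q_mod: "q mod 3 = 1"
    and s_def: "s = (q ^ 2 + q + 1) div 3"
    and c_nz: "c \<noteq> 0"
    and tr: "abs_trace m (c ^ (q + 1)) = 0"
  shows "bij (\<lambda>x::'a. c * x + x ^ s + c ^ q * x ^ (q * s))"
proof -
  obtain k where qk: "q = 3 * k + 1" using q_mod by (metis mod_div_mult_eq add.commute mult.commute)
  have sk: "s = 3 * k^2 + 3 * k + 1"
  proof -
    have "q ^ 2 + q + 1 = 3 * (3 * k^2 + 3 * k + 1)" unfolding qk by (simp add: power2_eq_square algebra_simps)
    then show ?thesis unfolding s_def by simp
  qed
  have card2: "card (UNIV :: 'a set) \<ge> 2"
  proof -
    have "card {0::'a, 1} = 2" by simp
    then show ?thesis by (metis card_mono finite subset_UNIV)
  qed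
  have m1: "m \<ge> 1"
  proof (rule ccontr)
    assume "\<not> m \<ge> 1" then have "q = 1" using q_def by simp
    then show False using card card2 by simp
  qed
  have odd_card1: "odd (q^2 - 1)"
  proof -
    have "even q" using q_def m1 by (simp add: dvd_power)
    moreover have "q \<ge> 1" using qk by simp
    ultimately show ?thesis by (simp add: power2_eq_square)
  qed
  have two: "(1::'a) + 1 = 0"
  proof -
    have "(-1::'a) ^ (q^2 - 1) = 1" using fermat_fin[of "-1::'a"] card by simp
    moreover have "(-1::'a) ^ (q^2 - 1) = -1" using odd_card1 by simp
    ultimately have "(-1::'a) = 1" by simp
    then show ?thesis by (metis add.right_inverse)
  qed
  have frob: "(a + b) ^ q = a ^ q + b ^ q" for a b :: 'a
    using char2_frob2[OF two] q_def by simp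
  have xq2: "x ^ (q * q) = x" for x :: 'a
    using pow_card[of x] card by (simp add: power2_eq_square)
  have q1: "q \<ge> 1" using qk by simp
  define e1 where "e1 = q * (q - 1)"
  have e1q: "e1 + q - 1 = q * q - 1" unfolding e1_def using q1
    by (simp add: diff_mult_distrib2)
  have unit: "y ^ (q * q - 1) = 1" if "y \<noteq> 0" for y :: 'a
    using fermat_fin[OF that] card by (simp add: power2_eq_square)
  have expid: "s * (e1 + 1) = 1 + (q * q - 1) * (3 * k^2 + 2 * k + 1)"
  proof -
    have a: "e1 + 1 = 9 * k^2 + 3 * k + 1" unfolding e1_def qk by (simp add: power2_eq_square algebra_simps)
    have b: "q * q - 1 = 9 * k^2 + 6 * k" unfolding qk by (simp add: power2_eq_square algebra_simps)
    show ?thesis unfolding a b sk by (simp add: power2_eq_square algebra_simps)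
  qed
  have inv: "(x ^ s) ^ (e1 + 1) = x" for x :: 'a
  proof (cases "x = 0")
    case True
    have "s * (e1 + 1) \<noteq> 0" using expid by simp
    then show ?thesis using True by (simp add: power_mult[symmetric])
  next
    case False
    have "(x ^ s) ^ (e1 + 1) = x * (x ^ (q * q - 1)) ^ (3 * k^2 + 2 * k + 1)"
    proof -
      have "(x ^ s) ^ (e1 + 1) = x ^ (s * (e1 + 1))" by (simp only: power_mult)
      also have "\<dots> = x ^ (1 + (q * q - 1) * (3 * k^2 + 2 * k + 1))" using expid by simp
      also have "\<dots> = x * (x ^ (q * q - 1)) ^ (3 * k^2 + 2 * k + 1)"
        by (simp only: power_add power_mult power_one_right)
      finally show ?thesis .
    qed
    then show ?thesis using unit[OF False] by simp
  qed
  define kk where "kk y = 1 + c * y ^ e1 + c ^ q * y ^ (q - 1)" for y :: 'a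
  define g where "g y = c * y ^ (e1 + 1) + y + c ^ q * y ^ q" for y :: 'a
  have fg: "c * x + x ^ s + c ^ q * x ^ (q * s) = g (x ^ s)" for x :: 'a
  proof -
    have "x ^ (q * s) = (x ^ s) ^ q" by (simp add: power_mult[symmetric] mult.commute)
    then show ?thesis unfolding g_def using inv[of x] by simp
  qed
  have gk: "g y = y * kk y" for y
  proof -
    have qs: "q = Suc (q - 1)" using q1 by simp
    have "y ^ q = y * y ^ (q - 1)" by (subst qs) (simp only: power_Suc)
    then show ?thesis unfolding g_def kk_def by (simp add: algebra_simps)
  qed
  have kkq: "kk y ^ q = kk y" for y
  proof -
    have "kk y ^ q = 1 + (c * y ^ e1) ^ q + (c ^ q * y ^ (q - 1)) ^ q"
      unfolding kk_def frob by simp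
    also have "(c * y ^ e1) ^ q = c ^ q * y ^ (q - 1)"
    proof -
      have ee: "e1 * q = (q * q) * (q - 1)" unfolding e1_def by (simp add: ac_simps)
      have "y ^ (e1 * q) = (y ^ (q * q)) ^ (q - 1)" unfolding ee by (simp only: power_mult)
      then have "y ^ (e1 * q) = y ^ (q - 1)" using xq2[of y] by simp
      moreover have "(c * y ^ e1) ^ q = c ^ q * y ^ (e1 * q)" by (simp only: power_mult_distrib power_mult)
      ultimately show ?thesis by simp
    qed
    also have "(c ^ q * y ^ (q - 1)) ^ q = c * y ^ e1"
    proof -
      have "(c ^ q * y ^ (q - 1)) ^ q = c ^ (q * q) * y ^ ((q - 1) * q)"
        by (simp only: power_mult_distrib power_mult)
      also have "(q - 1) * q = e1" unfolding e1_def by (rule mult.commute)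
      finally show ?thesis using xq2[of c] by simp
    qed
    finally show ?thesis unfolding kk_def by (simp add: algebra_simps)
  qed
  have key: "kk y \<noteq> 0" if y0: "y \<noteq> 0" for y
  proof
    assume eq: "kk y = 0"
    define z where "z = y ^ (q - 1)"
    have zq: "z ^ q = y ^ e1"
    proof -
      have "z ^ q = y ^ ((q - 1) * q)" unfolding z_def by (simp only: power_mult)
      also have "(q - 1) * q = e1" unfolding e1_def by (rule mult.commute)
      finally show ?thesis .
    qed
    have zz: "z * z ^ q = 1"
    proof -
      have ex: "(q - 1) + e1 = q * q - 1" using e1q q1 by simp
      have "z * z ^ q = z * y ^ e1" by (simp only: zq)
      also have "\<dots> = y ^ ((q - 1) + e1)" by (simp only: z_def power_add)
      finally have "z * z ^ q = y ^ ((q - 1) + e1)" .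
      then show ?thesis unfolding ex using unit[OF y0] by simp
    qed
    define w where "w = c ^ q * z"
    have wq: "w ^ q = c * z ^ q"
    proof -
      have "w ^ q = c ^ (q * q) * z ^ q" unfolding w_def by (simp only: power_mult_distrib power_mult)
      then show ?thesis using xq2[of c] by simp
    qed
    have eq': "1 + c * z ^ q + c ^ q * z = 0"
    proof -
      have "1 + c * z ^ q + c ^ q * z = 1 + c * y ^ e1 + c ^ q * y ^ (q - 1)" by (simp only: zq[symmetric] z_def[symmetric])
      also have "\<dots> = kk y" unfolding kk_def ..
      finally show ?thesis using eq by simp
    qed
    have A: "w ^ q + w = 1"
    proof -
      have ww: "w ^ q + w = c * z ^ q + c ^ q * z" by (subst wq) (simp add: w_def)
      have "1 + (w ^ q + w) = 0" using eq' unfolding ww by (simp add: algebra_simps)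
      then have "1 + (w ^ q + w) = 1 + 1" using two by simp
      then show ?thesis by (simp only: add_left_cancel)
    qed
    have B: "w ^ 2 + w = c ^ (q + 1)"
    proof -
      have "c ^ q * z * (1 + c * z ^ q + c ^ q * z) = 0" using eq' by simp
      then have "c ^ q * z + c ^ (q+1) * (z * z ^ q) + (c ^ q * z) ^ 2 = 0"
        by (simp add: algebra_simps power2_eq_square)
      then have "w + c ^ (q+1) + w ^ 2 = 0" using zz unfolding w_def by simp
      then have "(w ^ 2 + w) + c ^ (q+1) = c ^ (q+1) + c ^ (q+1)"
        using char2_add_self[OF two, of "c ^ (q+1)"] by (simp add: algebra_simps)
      then show ?thesis by (simp only: add_right_cancel)
    qed
    have "abs_trace m (c ^ (q + 1)) = w ^ q + w"
    proof -
      have "abs_trace m (c ^ (q + 1)) = (\<Sum>i<m. (w ^ 2 + w) ^ (2 ^ i))"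
        unfolding abs_trace_def B ..
      also have "\<dots> = w ^ (2 ^ m) + w" by (rule char2_telescope[OF two])
      finally show ?thesis using q_def by simp
    qed
    then show False using tr A by simp
  qed
  have ginj: "inj g"
  proof (rule injI)
    fix x y assume gxy: "g x = g y"
    show "x = y"
    proof (cases "x = 0 \<or> y = 0")
      case True
      have z0: "v = 0" if "g v = 0" for v
      proof (rule ccontr)
        assume "v \<noteq> 0"
        then have "v * kk v \<noteq> 0" using key[of v] by simp
        then show False using that unfolding gk by simp
      qed
      have g0: "g 0 = 0" unfolding gk by simp
      show ?thesis
      proof (cases "x = 0")
        case True
        then show ?thesis using z0[of y] gxy g0 by simp
      next
        case False
        then have "y = 0" using \<open>x = 0 \<or> y = 0\<close> by simp
        then show ?thesis using z0[of x] gxy g0 by simp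
      qed
    next
      case False
      then have x0: "x \<noteq> 0" and y0: "y \<noteq> 0" by auto
      have k1: "kk v ^ (q - 1) = 1" if "v \<noteq> 0" for v
      proof -
        have qs: "q = Suc (q - 1)" using q1 by simp
        have "kk v * kk v ^ (q - 1) = kk v ^ q" by (subst (2) qs) (simp only: power_Suc)
        then have "kk v * kk v ^ (q - 1) = kk v * 1" using kkq[of v] by simp
        then show ?thesis using key[OF that] by simp
      qed
      have "(x * kk x) ^ (q - 1) = (y * kk y) ^ (q - 1)" using gxy unfolding gk by simp
      then have zx: "x ^ (q - 1) = y ^ (q - 1)" using k1[OF x0] k1[OF y0] by (simp add: power_mult_distrib)
      have ee: "e1 = (q - 1) * q" unfolding e1_def by (rule mult.commute)
      have "x ^ e1 = y ^ e1" unfolding ee power_mult zx ..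
      then have "kk x = kk y" using zx unfolding kk_def by simp
      then show ?thesis using gxy key[OF x0] unfolding gk by simp
    qed
  qed
  have "inj (\<lambda>x::'a. c * x + x ^ s + c ^ q * x ^ (q * s))"
  proof (rule injI)
    fix x y :: 'a
    assume "c * x + x ^ s + c ^ q * x ^ (q * s) = c * y + y ^ s + c ^ q * y ^ (q * s)"
    then have "g (x ^ s) = g (y ^ s)" unfolding fg .
    then have "x ^ s = y ^ s" using ginj by (simp add: inj_eq)
    then show "x = y" using inv[of x] inv[of y] by simp
  qed
  then show ?thesis
    by (simp add: bij_def finite_UNIV_inj_surj[OF finite_UNIV])
qed

end
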